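(* Let $p\in(0,1]$. Let $Q=(q_{j,k})_{j,k\geq 0}$ be the generator on $\mathbb N_0$ with $q_{j,j+1}=jp$, $q_{j,k}=\binom{j}{k}p^k(1-p)^{j-k}$ for $0\leq k\leq j-1$, $q_{j,j}=-(jp+1-p^j)$, and $q_{j,k}=0$ otherwise. Let $\bar Q=(\bar q_{j,k})_{j,k\geq1}$ be the generator on $\mathbb N=\{1,2,\dots\}$ with $\bar q_{j,k}=\binom{j-1}{k-1}p^k(1-p)^{j-k}$ for $1\leq k\leq j-1$, $\bar q_{j,j+1}=(j+1)p$, $\bar q_{j,j}=p^j-(2+j)p$, and $\bar q_{j,k}=0$ otherwise. If $\bar Q$ defines a positive recurrent Markov chain, then there exists a quasi-stationary distribution $a$ for $Q$ with eigenvalue $-(1-2p)$, i.e. $a=(a_k)_{k\geq1}$ with $a_k\geq0$, $\sum_k a_k=1$ and $\sum_{j\geq1}a_jq_{j,k}=-(1-2p)a_k$ for all $k\geq1$.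
   Context: $\bar Q$ is the $(1-2p)$-dual of $Q$ with respect to the vector $x_k=k$, i.e. $\bar q_{j,k}=(q_{j,k}+(1-2p)\delta_{jk})k/j$ for $j,k\geq1$. *)

theory Defs
  imports "HOL-Analysis.Analysis"
begin

definition Qgen :: "real \<Rightarrow> nat \<Rightarrow> nat \<Rightarrow> real" where
  "Qgen p j k =
     (if k = j + 1 then real j * p
      else if k < j then real (j choose k) * p ^ k * (1 - p) ^ (j - k)
      else if k = j then - (real j * p + 1 - p ^ j)
      else 0)"

text \<open>The dual generator Qbar on the positive integers (only entries with j, k >= 1 matter).\<close>
definition Qbar :: "real \<Rightarrow> nat \<Rightarrow> nat \<Rightarrow> real" where
  "Qbar p j k =
     (if 1 \<le> k \<and> k < j then real ((j - 1) choose (k - 1)) * p ^ k * (1 - p) ^ (j - k)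
      else if k = j + 1 then real (j + 1) * p
      else if k = j then p ^ j - (2 + real j) * p
      else 0)"

text \<open>Jump matrix of the embedded (jump) chain, with q_i = - Q i i (Norris' convention).\<close>
definition jump_matrix :: "(nat \<Rightarrow> nat \<Rightarrow> real) \<Rightarrow> nat \<Rightarrow> nat \<Rightarrow> real" where
  "jump_matrix Q i j =
     (if - Q i i > 0 then (if j \<noteq> i then Q i j / (- Q i i) else 0)
      else (if j = i then 1 else 0))"

text \<open>taboo S Q i n j: probability that the jump chain started at i is at j at step n
  without having visited i at any of the steps 1, ..., n-1.\<close>
fun taboo :: "nat set \<Rightarrow> (nat \<Rightarrow> nat \<Rightarrow> real) \<Rightarrow> nat \<Rightarrow> nat \<Rightarrow> nat \<Rightarrow> ennreal" where
  "taboo S Q i 0 j = (if j = i then 1 else 0)"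
| "taboo S Q i (Suc n) j =
     (\<Sum>k. if k \<in> S \<and> (k \<noteq> i \<or> n = 0) then taboo S Q i n k * ennreal (jump_matrix Q k j) else 0)"

definition ctmc_irreducible :: "nat set \<Rightarrow> (nat \<Rightarrow> nat \<Rightarrow> real) \<Rightarrow> bool" where
  "ctmc_irreducible S Q \<longleftrightarrow>
     (\<forall>i\<in>S. \<forall>j\<in>S. (i, j) \<in> {(a, b). a \<in> S \<and> b \<in> S \<and> a \<noteq> b \<and> Q a b > 0}\<^sup>*)"

text \<open>Expected return time m_i = E_i[T_i], T_i = inf{t >= J_1 : X_t = i}:
  holding time at i plus expected holding times at the states j visited before returning.\<close>
definition mean_return_time :: "nat set \<Rightarrow> (nat \<Rightarrow> nat \<Rightarrow> real) \<Rightarrow> nat \<Rightarrow> ennreal" where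
  "mean_return_time S Q i =
     ennreal (1 / (- Q i i)) +
     (\<Sum>n. \<Sum>j. if j \<in> S \<and> j \<noteq> i then taboo S Q i (Suc n) j * ennreal (1 / (- Q j j)) else 0)"

definition pos_recurrent_state :: "nat set \<Rightarrow> (nat \<Rightarrow> nat \<Rightarrow> real) \<Rightarrow> nat \<Rightarrow> bool" where
  "pos_recurrent_state S Q i \<longleftrightarrow>
     - Q i i > 0 \<and> (\<Sum>n. taboo S Q i (Suc n) i) = 1 \<and> mean_return_time S Q i < \<infinity>"

definition pos_recurrent_chain :: "nat set \<Rightarrow> (nat \<Rightarrow> nat \<Rightarrow> real) \<Rightarrow> bool" where
  "pos_recurrent_chain S Q \<longleftrightarrow> ctmc_irreducible S Q \<and> (\<forall>i\<in>S. pos_recurrent_state S Q i)"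

definition qsd :: "(nat \<Rightarrow> nat \<Rightarrow> real) \<Rightarrow> real \<Rightarrow> (nat \<Rightarrow> real) \<Rightarrow> bool" where
  "qsd Q lam a \<longleftrightarrow>
     (\<forall>k\<ge>1. a k \<ge> 0) \<and> (a has_sum 1) {1..} \<and>
     (\<forall>k\<ge>1. ((\<lambda>j. a j * Q j k) has_sum (lam * a k)) {1..})"

end

theory Submission
  imports Defs
begin

lemma ennreal_suminf_swap:
  fixes f :: "nat \<Rightarrow> nat \<Rightarrow> ennreal"
  shows "(\<Sum>i. \<Sum>j. f i j) = (\<Sum>j. \<Sum>i. f i j)"
proof -
  have "(\<Sum>i. \<Sum>j. f i j) = (\<Sum>i. \<integral>\<^sup>+j. f i j \<partial>count_space UNIV)"
    by (simp add: nn_integral_count_space_nat)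
  also have "\<dots> = \<integral>\<^sup>+j. (\<Sum>i. f i j) \<partial>count_space UNIV"
    by (rule nn_integral_suminf[symmetric]) simp
  also have "\<dots> = (\<Sum>j. \<Sum>i. f i j)" by (simp add: nn_integral_count_space_nat)
  finally show ?thesis .
qed

lemma Qbar_offdiag_nonneg:
  assumes "0 \<le> p" "p \<le> 1" "j \<noteq> k"
  shows "0 \<le> Qbar p j k"
  using assms unfolding Qbar_def by auto

lemma Qbar_diag_neg:
  assumes "0 < p" "p \<le> 1" "1 \<le> j"
  shows "0 < - Qbar p j j"
proof -
  have "p ^ j \<le> p ^ 1" by (rule power_decreasing) (use assms in auto)
  hence "p ^ j \<le> p" by simp
  moreover have "Qbar p j j = p ^ j - 2 * p - p * real j" unfolding Qbar_def by (simp add: algebra_simps)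
  moreover have "p * 1 \<le> p * real j" using assms by (intro mult_left_mono) auto
  ultimately show ?thesis using assms by linarith
qed

lemma Qgen_Qbar:
  assumes "1 \<le> j" "1 \<le> k"
  shows "real k * Qgen p j k = real j * Qbar p j k - (1 - 2*p) * (if j = k then real k else 0)"
proof -
  consider "k < j" | "k = j + 1" | "k = j" | "\<not> k < j \<and> k \<noteq> j + 1 \<and> k \<noteq> j" by linarith
  then show ?thesis
  proof cases
    case 1
    obtain j' where j': "j = Suc j'" using assms by (cases j) auto
    obtain k' where k': "k = Suc k'" using assms by (cases k) auto
    have "Suc k' * (Suc j' choose Suc k') = Suc j' * (j' choose k')"
      by (rule Suc_times_binomial)
    hence "real k * real (j choose k) = real j * real ((j - 1) choose (k - 1))"
      using j' k' by (metis diff_Suc_1 of_nat_mult)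
    then show ?thesis using 1 assms unfolding Qgen_def Qbar_def
      by (simp add: mult.assoc[symmetric])
  next
    case 2 then show ?thesis unfolding Qgen_def Qbar_def by (simp add: algebra_simps)
  next
    case 3 then show ?thesis unfolding Qgen_def Qbar_def by (simp add: algebra_simps)
  next
    case 4 then show ?thesis unfolding Qgen_def Qbar_def by auto
  qed
qed

theorem proposition4:
  fixes p :: real
  assumes "0 < p" and "p \<le> 1"
    and "pos_recurrent_chain {1..} (Qbar p)"
  shows "\<exists>a. qsd (Qgen p) (- (1 - 2 * p)) a"
proof -
  define Q where "Q = Qbar p"
  define S :: "nat set" where "S = {1..}"
  define q where "q j = - Q j j" for j
  define E where "E m k = ennreal (jump_matrix Q m k)" for m k
  define t where "t n k = taboo S Q 1 n k" for n k
  define G where "G k = (\<Sum>n. t (Suc n) k)" for k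
  define H where "H m = (if m = 1 then 1 else G m)" for m
  have qpos: "0 < q j" if "j \<in> S" for j
    using Qbar_diag_neg[OF assms(1,2)] that unfolding q_def Q_def S_def by auto
  have offd: "0 \<le> Q j k" if "j \<noteq> k" for j k
    using Qbar_offdiag_nonneg[of p j k] assms that unfolding Q_def by auto
  have rec: "pos_recurrent_state S Q 1"
    using assms(3) unfolding pos_recurrent_chain_def S_def Q_def by auto
  hence G1: "G 1 = 1" and mrt: "mean_return_time S Q 1 < \<infinity>"
    unfolding pos_recurrent_state_def G_def t_def by auto
  have t0: "t 0 k = (if k = 1 then 1 else 0)" for k by (simp add: t_def)
  have tS: "t (Suc n) k = (\<Sum>m. if m \<in> S \<and> (m \<noteq> 1 \<or> n = 0) then t n m * E m k else 0)" for n k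
    unfolding t_def E_def by (simp only: taboo.simps)
  have sumt: "(\<Sum>n. t n m) = G m" if "m \<noteq> 1" for m
  proof -
    have "(\<lambda>n. t (Suc n) m) sums G m" unfolding G_def by (rule summable_sums[OF summableI])
    hence "(\<lambda>n. t n m) sums (G m + t 0 m)" by (rule sums_Suc)
    thus ?thesis using that t0 by (simp add: sums_iff)
  qed
  have stepA: "G k = (\<Sum>m. if m \<in> S then H m * E m k else 0)" for k
  proof -
    have "G k = (\<Sum>n. \<Sum>m. if m \<in> S \<and> (m \<noteq> 1 \<or> n = 0) then t n m * E m k else 0)"
      unfolding G_def tS ..
    also have "\<dots> = (\<Sum>m. \<Sum>n. if m \<in> S \<and> (m \<noteq> 1 \<or> n = 0) then t n m * E m k else 0)"
      by (rule ennreal_suminf_swap)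
    also have "\<dots> = (\<Sum>m. if m \<in> S then H m * E m k else 0)"
    proof (rule suminf_cong)
      fix m
      show "(\<Sum>n. if m \<in> S \<and> (m \<noteq> 1 \<or> n = 0) then t n m * E m k else 0) = (if m \<in> S then H m * E m k else 0)"
      proof (cases "m \<in> S")
        case False thus ?thesis by simp
      next
        case mS: True
        show ?thesis
        proof (cases "m = 1")
          case True
          have "(\<lambda>n. if m \<in> S \<and> (m \<noteq> 1 \<or> n = 0) then t n m * E m k else 0) = (\<lambda>n. if n = 0 then E 1 k else 0)"
            using True mS by (auto simp: t0 fun_eq_iff)
          moreover have "(\<lambda>n. if n = 0 then E 1 k else 0) sums E 1 k"
            using sums_single[of 0 "\<lambda>_. E 1 k"] by simp
          ultimately show ?thesis using True mS by (simp add: sums_iff H_def)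
        next
          case False
          hence "(\<Sum>n. if m \<in> S \<and> (m \<noteq> 1 \<or> n = 0) then t n m * E m k else 0) = (\<Sum>n. t n m * E m k)"
            using mS by simp
          also have "\<dots> = G m * E m k" using sumt[OF False] by simp
          finally show ?thesis using False mS by (simp add: H_def)
        qed
      qed
    qed
    finally show ?thesis .
  qed
  have inv: "H k = (\<Sum>m. if m \<in> S then H m * E m k else 0)" if "k \<in> S" for k
    using stepA[of k] G1 by (cases "k = 1") (auto simp: H_def)
  define w where "w j = (if j \<in> S \<and> j \<noteq> 1 then G j * ennreal (1 / q j) else 0)" for j
  have mrt_eq: "mean_return_time S Q 1 = ennreal (1 / q 1) + (\<Sum>j. w j)"
  proof -
    have "mean_return_time S Q 1 = ennreal (1/q 1) + (\<Sum>n. \<Sum>j. if j \<in> S \<and> j \<noteq> 1 then t (Suc n) j * ennreal (1 / q j) else 0)"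
      unfolding mean_return_time_def t_def q_def by simp
    also have "(\<Sum>n. \<Sum>j. if j \<in> S \<and> j \<noteq> 1 then t (Suc n) j * ennreal (1 / q j) else 0)
        = (\<Sum>j. \<Sum>n. if j \<in> S \<and> j \<noteq> 1 then t (Suc n) j * ennreal (1 / q j) else 0)"
      by (rule ennreal_suminf_swap)
    also have "\<dots> = (\<Sum>j. w j)" by (rule suminf_cong) (auto simp add: w_def G_def)
    finally show ?thesis .
  qed
  have wfin: "(\<Sum>j. w j) < \<infinity>"
  proof -
    have "(\<Sum>j. w j) \<le> ennreal (1 / q 1) + (\<Sum>j. w j)" by simp
    thus ?thesis using mrt mrt_eq by simp
  qed
  have wj: "w j < \<infinity>" for j using ennreal_suminf_lessD[OF wfin] .
  define \<mu> where "\<mu> j = enn2real (w j) + (if j = 1 then 1 / q 1 else 0)" for j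
  have S1: "1 \<in> S" by (simp add: S_def)
  have \<mu>nn: "0 \<le> \<mu> j" for j using qpos[OF S1] by (simp add: \<mu>_def)
  have \<mu>0: "\<mu> 0 = 0" by (simp add: \<mu>_def w_def S_def)
  have \<mu>1: "0 < \<mu> 1" using qpos[OF S1] by (simp add: \<mu>_def w_def)
  have hmu: "H j * ennreal (1 / q j) = ennreal (\<mu> j)" if "j \<in> S" for j
  proof (cases "j = 1")
    case True thus ?thesis by (simp add: H_def \<mu>_def w_def)
  next
    case False
    hence "w j = H j * ennreal (1 / q j)" using that by (simp add: w_def H_def)
    moreover have "\<mu> j = enn2real (w j)" using False by (simp add: \<mu>_def)
    ultimately show ?thesis using wj[of j] by (simp add: ennreal_enn2real)
  qed
  have Hmu: "H j = ennreal (\<mu> j * q j)" if "j \<in> S" for j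
  proof -
    have "ennreal (1 / q j) * ennreal (q j) = 1"
      using qpos[OF that] by (simp add: ennreal_mult[symmetric])
    hence "H j = H j * ennreal (1 / q j) * ennreal (q j)" by (simp add: mult.assoc)
    also have "\<dots> = ennreal (\<mu> j * q j)"
      using hmu[OF that] qpos[OF that] \<mu>nn[of j] by (simp add: ennreal_mult)
    finally show ?thesis .
  qed
  have summ_w: "summable (\<lambda>j. enn2real (w j))"
  proof (rule summable_suminf_not_top)
    show "(\<Sum>j. ennreal (enn2real (w j))) \<noteq> top"
      using wfin wj by (simp add: ennreal_enn2real)
  qed simp
  have summ_mu: "summable \<mu>"
  proof -
    have "summable (\<lambda>j. enn2real (w j) + (if j = 1 then 1 / q 1 else 0))"
      by (intro summable_add summ_w) simp
    thus ?thesis unfolding \<mu>_def[abs_def] .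
  qed
  have stat: "((\<lambda>j. \<mu> j * Q j k) has_sum 0) S" if kS: "k \<in> S" for k
  proof -
    define g where "g m = (if m \<in> S \<and> m \<noteq> k then \<mu> m * Q m k else 0)" for m
    have gnn: "0 \<le> g m" for m using \<mu>nn offd by (simp add: g_def)
    have "(if m \<in> S then H m * E m k else 0) = ennreal (g m)" for m
    proof (cases "m \<in> S")
      case False thus ?thesis by (simp add: g_def)
    next
      case True
      have jm: "jump_matrix Q m k = (if k \<noteq> m then Q m k / q m else 0)"
        using qpos[OF True] unfolding jump_matrix_def q_def by simp
      show ?thesis
      proof (cases "m = k")
        case True thus ?thesis using \<open>m \<in> S\<close> jm by (simp add: g_def E_def)
      next
        case False
        have "H m * E m k = ennreal (\<mu> m * q m) * ennreal (Q m k / q m)"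
          using Hmu[OF \<open>m \<in> S\<close>] jm False by (simp add: E_def)
        also have "\<dots> = ennreal (\<mu> m * q m * (Q m k / q m))"
          using \<mu>nn[of m] qpos[OF \<open>m \<in> S\<close>] offd[of m k] False
          by (intro ennreal_mult[symmetric]) auto
        also have "\<mu> m * q m * (Q m k / q m) = \<mu> m * Q m k" using qpos[OF \<open>m \<in> S\<close>] by simp
        finally show ?thesis using False \<open>m \<in> S\<close> by (simp add: g_def)
      qed
    qed
    hence "ennreal (\<mu> k * q k) = (\<Sum>m. ennreal (g m))" using inv[OF kS] Hmu[OF kS] by simp
    moreover have "(\<lambda>m. ennreal (g m)) sums (\<Sum>m. ennreal (g m))" by (rule summable_sums[OF summableI])
    ultimately have "(\<lambda>m. ennreal (g m)) sums ennreal (\<mu> k * q k)" by simp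
    hence gs: "g sums (\<mu> k * q k)" using gnn \<mu>nn[of k] qpos[OF kS] by simp
    have "(g has_sum (\<mu> k * q k)) UNIV"
      by (rule norm_summable_imp_has_sum) (use gs gnn in \<open>auto simp: sums_iff\<close>)
    hence g1: "(g has_sum (\<mu> k * q k)) S"
      by (rule has_sum_cong_neutral[THEN iffD1, rotated -1]) (auto simp: g_def)
    have g2: "((\<lambda>j. if j = k then \<mu> k * Q k k else 0) has_sum (\<mu> k * Q k k)) S"
      by (rule has_sum_finite_neutralI[of "{k}"]) (use kS in auto)
    have "((\<lambda>j. g j + (if j = k then \<mu> k * Q k k else 0)) has_sum (\<mu> k * q k + \<mu> k * Q k k)) S"
      by (rule has_sum_add[OF g1 g2])
    moreover have "\<mu> k * q k + \<mu> k * Q k k = 0" by (simp add: q_def)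
    ultimately show ?thesis
      by (subst has_sum_cong[where g = "\<lambda>j. g j + (if j = k then \<mu> k * Q k k else 0)"])
         (auto simp: g_def)
  qed
  define c where "c j = \<mu> j / real j" for j
  have cnn: "0 \<le> c j" for j using \<mu>nn by (simp add: c_def)
  have cle: "c j \<le> \<mu> j" for j
  proof (cases "j = 0")
    case True thus ?thesis by (simp add: c_def \<mu>0)
  next
    case False
    hence "1 \<le> real j" by simp
    thus ?thesis using \<mu>nn[of j] unfolding c_def
      by (simp add: divide_le_eq mult_le_cancel_left1)
  qed
  have summ_c: "summable c"
    by (rule summable_comparison_test[OF _ summ_mu]) (use cnn cle in auto)
  define Z where "Z = suminf c"
  have Zpos: "0 < Z" unfolding Z_def
    by (rule suminf_pos2[OF summ_c cnn, of 1]) (use \<mu>1 in \<open>simp add: c_def\<close>)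
  have "(c has_sum Z) UNIV"
    by (rule norm_summable_imp_has_sum) (use summ_c cnn in \<open>auto simp: Z_def summable_sums\<close>)
  hence cS: "(c has_sum Z) S"
    by (rule has_sum_cong_neutral[THEN iffD1, rotated -1]) (auto simp: c_def S_def)
  define a where "a j = c j / Z" for j
  have "qsd (Qgen p) (- (1 - 2 * p)) a"
    unfolding qsd_def
  proof (intro conjI allI impI)
    fix k :: nat show "0 \<le> a k" using cnn Zpos by (simp add: a_def)
  next
    have "((\<lambda>j. (1 / Z) * c j) has_sum ((1 / Z) * Z)) S" by (rule has_sum_cmult_right[OF cS])
    thus "(a has_sum 1) {1..}" using Zpos unfolding a_def[abs_def] by (simp add: S_def)
  next
    fix k :: nat assume k1: "1 \<le> k"
    hence kS: "k \<in> S" by (simp add: S_def)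
    have h1: "((\<lambda>j. (1 / (real k * Z)) * (\<mu> j * Q j k)) has_sum ((1 / (real k * Z)) * 0)) S"
      by (rule has_sum_cmult_right[OF stat[OF kS]])
    have h2: "((\<lambda>j. if j = k then - (1 - 2 * p) * a k else 0) has_sum (- (1 - 2 * p) * a k)) S"
      by (rule has_sum_finite_neutralI[of "{k}"]) (use kS in auto)
    have h3: "((\<lambda>j. (1 / (real k * Z)) * (\<mu> j * Q j k) + (if j = k then - (1 - 2 * p) * a k else 0))
        has_sum (- (1 - 2 * p) * a k)) S"
      using has_sum_add[OF h1 h2] by simp
    have eq: "a j * Qgen p j k = (1 / (real k * Z)) * (\<mu> j * Q j k) + (if j = k then - (1 - 2 * p) * a k else 0)"
      if "j \<in> S" for j
    proof -
      have j1: "1 \<le> j" using that by (simp add: S_def)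
      have id: "real k * Qgen p j k = real j * Q j k - (1 - 2*p) * (if j = k then real k else 0)"
        using Qgen_Qbar[OF j1 k1] by (simp add: Q_def)
      have "Qgen p j k = (real j * Q j k - (1 - 2*p) * (if j = k then real k else 0)) / real k"
        using id k1 by (simp add: field_simps)
      show ?thesis
      proof (cases "j = k")
        case True
        have "real k * Qgen p k k = real k * (Q k k - (1 - 2*p))"
          using id True by (simp add: algebra_simps)
        hence qk: "Qgen p k k = Q k k - (1 - 2*p)" using k1 by simp
        show ?thesis using True k1 Zpos by (simp add: qk a_def c_def field_simps)
      next
        case False
        thus ?thesis using \<open>Qgen p j k = _\<close> j1 k1 Zpos by (simp add: a_def c_def field_simps)
      qed
    qed
    show "((\<lambda>j. a j * Qgen p j k) has_sum (- (1 - 2 * p) * a k)) {1..}"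
      using h3 eq unfolding S_def by (subst has_sum_cong) auto
  qed
  thus ?thesis by blast
qed

end
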